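(* Let $k\ge1$, $\epsilon\in\mathbb{R}$, $\bm\mu_X,\bm\mu_{X'}\in\mathbb{R}^k$, and let $\bm\Sigma_X,\bm\Sigma_{X'}$ be symmetric positive definite $k\times k$ matrices. Let $\bm q\sim\mathcal N(\bm\mu_X,\bm\Sigma_X)$ and $L_{XX'}(\bm q)=\ln\frac{f(\bm q\mid X)}{f(\bm q\mid X')}$, where $f(\cdot\mid X)$, $f(\cdot\mid X')$ are the densities of $\mathcal N(\bm\mu_X,\bm\Sigma_X)$ and $\mathcal N(\bm\mu_{X'},\bm\Sigma_{X'})$. Let $\bm U_{XX'}\bm\Gamma_{XX'}\bm U_{XX'}^\top=\bm\Sigma_X^{1/2}\bm\Sigma_{X'}^{-1}\bm\Sigma_X^{1/2}$ be an eigenvalue decomposition with $\bm U_{XX'}$ orthogonal and $\bm\Gamma_{XX'}$ diagonal, let $\gamma_1=\lambda_{\max}(\bm\Sigma_X^{1/2}\bm\Sigma_{X'}^{-1}\bm\Sigma_X^{1/2})$, and let $\bm\mu_{XX'}=\bm U_{XX'}^\top\bm\Sigma_X^{-1/2}(\bm\mu_{X'}-\bm\mu_X)$. Then for all $s>\max(1,\gamma_1)$, $$\Pr\big(L_{XX'}(\bm q)>\epsilon\big)\le\frac{(s-1)^{k/2}}{|\bm\Gamma_{XX'}|^{\frac{1}{2(s-1)}}\,|s\bm I-\bm\Gamma_{XX'}|^{1/2}}\exp\!\left(-\frac{\epsilon}{s-1}+\frac{s}{2(s-1)}\bm\mu_{XX'}^\top(s\bm I-\bm\Gamma_{XX'}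)^{-1}\bm\Gamma_{XX'}\bm\mu_{XX'}\right).$$
   Context: $|\bm A|$ denotes the determinant, $\lambda_{\max}$ the largest eigenvalue, and $\bm\Sigma^{1/2}$, $\bm\Sigma^{-1/2}$ the symmetric positive definite square root of a symmetric positive definite matrix and its inverse. *)

theory Defs
  imports "HOL-Analysis.Analysis"
begin

definition symmetric_pd :: "real^'k^'k \<Rightarrow> bool" where
  "symmetric_pd A \<longleftrightarrow> transpose A = A \<and> (\<forall>x. x \<noteq> 0 \<longrightarrow> x \<bullet> (A *v x) > 0)"

definition diagonal_mat :: "real^'k^'k \<Rightarrow> bool" where
  "diagonal_mat A \<longleftrightarrow> (\<forall>i j. i \<noteq> j \<longrightarrow> A $ i $ j = 0)"

definition lambda_max :: "real^'k^'k \<Rightarrow> real" where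
  "lambda_max A = Max {l. \<exists>v. v \<noteq> 0 \<and> A *v v = l *\<^sub>R v}"

definition gauss_density :: "real^'k \<Rightarrow> real^'k^'k \<Rightarrow> real^'k \<Rightarrow> real" where
  "gauss_density mu Sig q =
     exp (- (1/2) * ((q - mu) \<bullet> (matrix_inv Sig *v (q - mu))))
     / sqrt ((2 * pi) ^ CARD('k) * det Sig)"

definition gauss_measure :: "real^'k \<Rightarrow> real^'k^'k \<Rightarrow> (real^'k) measure" where
  "gauss_measure mu Sig = density lborel (\<lambda>q. ennreal (gauss_density mu Sig q))"

end

theory Submission
  imports Defs "HOL-Probability.Probability" "HOL-Library.Countable"
begin

typedef ('a::finite) wo = "UNIV :: 'a set" morphisms rep_wo abs_wo by simp

instantiation wo :: (finite) linorder
begin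
definition less_eq_wo :: "'a wo \<Rightarrow> 'a wo \<Rightarrow> bool" where
  "less_eq_wo x y \<longleftrightarrow> to_nat (rep_wo x) \<le> to_nat (rep_wo y)"
definition less_wo :: "'a wo \<Rightarrow> 'a wo \<Rightarrow> bool" where
  "less_wo x y \<longleftrightarrow> to_nat (rep_wo x) < to_nat (rep_wo y)"
instance proof
  fix x y :: "'a wo"
  show "x \<le> y \<Longrightarrow> y \<le> x \<Longrightarrow> x = y"
    unfolding less_eq_wo_def by (metis antisym rep_wo_inject to_nat_split)
qed (auto simp: less_eq_wo_def less_wo_def)
end

instance wo :: (finite) finite
proof
  have "(UNIV :: 'a wo set) = abs_wo ` UNIV"
    by (metis abs_wo_cases surj_def)
  then show "finite (UNIV :: 'a wo set)" by (metis finite finite_imageI)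
qed

instance wo :: (finite) wellorder
proof
  fix P :: "'a wo \<Rightarrow> bool" and a
  assume H: "\<And>x. (\<And>y. y < x \<Longrightarrow> P y) \<Longrightarrow> P x"
  show "P a"
    by (induct a rule: measure_induct_rule[of "\<lambda>x. to_nat (rep_wo x)"])
       (rule H, simp add: less_wo_def)
qed


definition tv :: "real^'k::finite \<Rightarrow> real^'k wo" where "tv x = (\<chi> j. x $ rep_wo j)"
definition tvi :: "real^'k wo \<Rightarrow> real^'k::finite" where "tvi y = (\<chi> i. y $ abs_wo i)"
definition tm :: "real^'k::finite^'k \<Rightarrow> real^'k wo^'k wo" where
  "tm A = (\<chi> i j. A $ rep_wo i $ rep_wo j)"

lemma tvi_tv[simp]: "tvi (tv x) = x"
  by (simp add: tv_def tvi_def abs_wo_inverse vec_eq_iff)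

lemma tv_tvi[simp]: "tv (tvi y) = y"
  by (simp add: tv_def tvi_def rep_wo_inverse vec_eq_iff)

lemma sum_rep_wo: "(\<Sum>j\<in>UNIV. f (rep_wo j)) = (\<Sum>j\<in>UNIV. f j)"
proof -
  have "inj rep_wo" by (meson injI rep_wo_inject)
  moreover have "range rep_wo = UNIV" by (metis UNIV_I abs_wo_inverse image_eqI subsetI subset_antisym)
  ultimately show ?thesis using sum.reindex[of rep_wo UNIV f] by (metis (no_types) comp_apply sum.cong)
qed

lemma prod_rep_wo: "(\<Prod>j\<in>UNIV. f (rep_wo j)) = (\<Prod>j\<in>UNIV. f j)"
proof -
  have "inj rep_wo" by (meson injI rep_wo_inject)
  moreover have "range rep_wo = UNIV" by (metis UNIV_I abs_wo_inverse image_eqI subsetI subset_antisym)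
  ultimately show ?thesis using prod.reindex[of rep_wo UNIV f] by (metis (no_types) comp_apply prod.cong)
qed

lemma tm_mult: "tm A *v tv x = tv (A *v x)"
  by (simp add: tm_def tv_def matrix_vector_mult_def vec_eq_iff sum_rep_wo[where f="\<lambda>j. A $ _ $ j * x $ j"])

lemma tvi_mult: "A *v tvi y = tvi (tm A *v y)"
  by (metis tm_mult tv_tvi tvi_tv)

lemma linear_tv: "linear tv"
  by (auto simp: linear_iff tv_def vec_eq_iff)

lemma linear_tvi: "linear tvi"
  by (auto simp: linear_iff tvi_def vec_eq_iff)

lemma det_tm: "det (tm A) = det A"
proof -
  have "det (tm A) = (\<Sum>p\<in>{p. p permutes (UNIV::'a wo set)}.
          of_int (sign p) * (\<Prod>i\<in>UNIV. A $ rep_wo i $ rep_wo (p i)))"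
    by (simp add: det_def tm_def)
  also have "\<dots> = (\<Sum>p\<in>{p. p permutes (UNIV::'a set)}.
          of_int (sign p) * (\<Prod>i\<in>UNIV. A $ i $ p i))"
  proof (rule sum.reindex_bij_witness[of _ "\<lambda>p. abs_wo \<circ> p \<circ> rep_wo" "\<lambda>p. rep_wo \<circ> p \<circ> abs_wo"])
    fix p :: "'a \<Rightarrow> 'a" assume p: "p \<in> {p. p permutes UNIV}"
    show "rep_wo \<circ> (abs_wo \<circ> p \<circ> rep_wo) \<circ> abs_wo = p"
      by (auto simp: fun_eq_iff abs_wo_inverse rep_wo_inverse)
    interpret pb: permutes_bij_finite p UNIV UNIV abs_wo rep_wo "\<lambda>x. if x \<in> UNIV then abs_wo (p (rep_wo x)) else x"
      by unfold_locales (use p in \<open>auto simp: abs_wo_inverse bij_betw_def inj_on_def abs_wo_inject\<close>, metis abs_wo_cases rangeI)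
    have eq: "(\<lambda>x. if x \<in> UNIV then abs_wo (p (rep_wo x)) else x) = abs_wo \<circ> p \<circ> rep_wo" by (simp add: fun_eq_iff)
    show "abs_wo \<circ> p \<circ> rep_wo \<in> {p. p permutes UNIV}"
      using pb.permutes_p' eq by simp
  next
    fix p :: "'a wo \<Rightarrow> 'a wo" assume p: "p \<in> {p. p permutes UNIV}"
    show "abs_wo \<circ> (rep_wo \<circ> p \<circ> abs_wo) \<circ> rep_wo = p"
      by (auto simp: fun_eq_iff abs_wo_inverse rep_wo_inverse)
    interpret pb: permutes_bij_finite p UNIV UNIV rep_wo abs_wo "\<lambda>x. if x \<in> UNIV then rep_wo (p (abs_wo x)) else x"
      by unfold_locales (use p in \<open>auto simp: rep_wo_inverse bij_betw_def inj_on_def rep_wo_inject\<close>, metis UNIV_I abs_wo_inverse rangeI)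
    have eq: "(\<lambda>x. if x \<in> UNIV then rep_wo (p (abs_wo x)) else x) = rep_wo \<circ> p \<circ> abs_wo" by (simp add: fun_eq_iff)
    show "rep_wo \<circ> p \<circ> abs_wo \<in> {p. p permutes UNIV}"
      using pb.permutes_p' eq by simp
    have "(\<Prod>i\<in>UNIV. A $ i $ (rep_wo \<circ> p \<circ> abs_wo) i) = (\<Prod>i\<in>UNIV. A $ rep_wo i $ (rep_wo \<circ> p \<circ> abs_wo) (rep_wo i))"
      by (rule prod_rep_wo[symmetric])
    also have "\<dots> = (\<Prod>i\<in>UNIV. A $ rep_wo i $ rep_wo (p i))"
      by (simp add: rep_wo_inverse)
    finally show "of_int (sign (rep_wo \<circ> p \<circ> abs_wo)) * (\<Prod>i\<in>UNIV. A $ i $ (rep_wo \<circ> p \<circ> abs_wo) i)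
          = of_int (sign p) * (\<Prod>i\<in>UNIV. A $ rep_wo i $ rep_wo (p i))"
      using pb.sign_p' eq by simp
  qed
  also have "\<dots> = det A" by (simp add: det_def)
  finally show ?thesis .
qed

lemma Basis_vec_range: "(Basis :: (real^'n) set) = range (\<lambda>i. axis i 1)"
  by (auto simp: Basis_vec_def)

lemma prod_Basis_vec: "(\<Prod>b\<in>(Basis :: (real^'n) set). f b) = (\<Prod>i\<in>UNIV. f (axis i 1))"
proof -
  have "inj (\<lambda>i::'n. axis i (1::real))" by (auto simp: inj_def axis_eq_axis)
  then show ?thesis unfolding Basis_vec_range using prod.reindex[of "\<lambda>i::'n. axis i (1::real)" UNIV f]
    by (simp add: comp_def)
qed

lemma tvi_box: "tvi -` box l u = box (tv l) (tv u)"
proof (intro set_eqI iffI)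
  fix x :: "real^'a wo"
  assume "x \<in> tvi -` box l u"
  then have H: "l$i < x$abs_wo i \<and> x$abs_wo i < u$i" for i by (simp add: mem_box_cart tvi_def)
  show "x \<in> box (tv l) (tv u)" unfolding mem_box_cart tv_def
    using H[of "rep_wo _"] by (simp add: rep_wo_inverse)
next
  fix x :: "real^'a wo"
  assume "x \<in> box (tv l) (tv u)"
  then have H: "l$rep_wo j < x$j \<and> x$j < u$rep_wo j" for j by (simp add: mem_box_cart tv_def)
  show "x \<in> tvi -` box l u" unfolding mem_box_cart tvi_def vimage_eq
    using H[of "abs_wo _"] by (simp add: abs_wo_inverse)
qed

lemma tvi_measurable[measurable]: "tvi \<in> borel_measurable borel"
  by (intro borel_measurable_continuous_onI linear_continuous_on linear_conv_bounded_linear[THEN iffD1] linear_tvi)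

lemma distr_tvi: "distr lborel borel (tvi :: real^'k wo \<Rightarrow> real^'k::finite) = lborel"
proof (rule lborel_eqI[symmetric])
  fix l u :: "real^'k" assume le: "\<And>b. b \<in> Basis \<Longrightarrow> l \<bullet> b \<le> u \<bullet> b"
  have le': "l $ i \<le> u $ i" for i using le[of "axis i 1"] by (simp add: inner_axis Basis_vec_range)
  have "emeasure (distr lborel borel tvi) (box l u) = emeasure lborel (box (tv l) (tv u) :: (real^'k wo) set)"
    by (simp add: emeasure_distr tvi_box)
  also have "\<dots> = ennreal (\<Prod>b\<in>Basis. (tv u - tv l) \<bullet> b)"
    using le' by (subst emeasure_lborel_box_eq) (auto simp: Basis_vec_range inner_axis tv_def)
  also have "(\<Prod>b\<in>Basis. (tv u - tv l) \<bullet> b) = (\<Prod>i\<in>UNIV. (u - l) $ rep_wo i)"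
    by (simp add: prod_Basis_vec inner_axis tv_def)
  also have "\<dots> = (\<Prod>i\<in>UNIV. (u - l) $ i)"
    by (rule prod_rep_wo)
  also have "\<dots> = (\<Prod>b\<in>Basis. (u - l) \<bullet> b)"
    by (simp add: prod_Basis_vec inner_axis)
  finally show "emeasure (distr lborel borel tvi) (box l u) = (\<Prod>b\<in>Basis. (u - l) \<bullet> b)" .
qed simp


lemma matrix_inv_both:
  fixes A :: "real^'n^'n"
  assumes "invertible A"
  shows "A ** matrix_inv A = mat 1" "matrix_inv A ** A = mat 1"
proof -
  have "\<exists>A'. A ** A' = mat 1 \<and> A' ** A = mat 1" using assms by (simp add: invertible_def)
  then have "A ** matrix_inv A = mat 1 \<and> matrix_inv A ** A = mat 1"
    unfolding matrix_inv_def by (rule someI_ex)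
  then show "A ** matrix_inv A = mat 1" "matrix_inv A ** A = mat 1" by auto
qed

lemma det_matrix_inv:
  fixes A :: "real^'n^'n"
  assumes "invertible A"
  shows "det A * det (matrix_inv A) = 1"
  using det_mul[of A "matrix_inv A"] matrix_inv_both[OF assms] by simp

lemma lborel_box_linear_wo:
  fixes B :: "real^'n::{finite,wellorder}^'n::_"
  assumes inv: "invertible B"
  shows "emeasure lborel (box l u) = ennreal \<bar>det B\<bar> * emeasure lborel ((\<lambda>x. B *v x) -` box l u)"
proof -
  let ?Bi = "matrix_inv B"
  note BB = matrix_inv_both[OF inv]
  have pre: "(\<lambda>x. B *v x) -` box l u = (\<lambda>x. ?Bi *v x) ` box l u"
  proof (intro set_eqI iffI)
    fix x assume "x \<in> (\<lambda>x. B *v x) -` box l u"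
    then have "B *v x \<in> box l u" by simp
    moreover have "x = ?Bi *v (B *v x)" by (simp add: matrix_vector_mul_assoc BB)
    ultimately show "x \<in> (\<lambda>x. ?Bi *v x) ` box l u" by blast
  next
    fix x assume "x \<in> (\<lambda>x. ?Bi *v x) ` box l u"
    then obtain y where "y \<in> box l u" "x = ?Bi *v y" by blast
    then show "x \<in> (\<lambda>x. B *v x) -` box l u" by (simp add: matrix_vector_mul_assoc BB)
  qed
  have lin: "linear ((*v) ?Bi)" by (rule matrix_vector_mul_linear)
  have meq: "measure lebesgue ((\<lambda>x. ?Bi *v x) ` box l u) = \<bar>det ?Bi\<bar> * measure lebesgue (box l u)"
    using measure_linear_image[OF lin lmeasurable_box] by simp
  have mB[measurable]: "(\<lambda>x. B *v x) \<in> borel_measurable borel"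
    by (intro borel_measurable_continuous_onI linear_continuous_on linear_conv_bounded_linear[THEN iffD1] matrix_vector_mul_linear)
  have sB: "(\<lambda>x. ?Bi *v x) ` box l u \<in> sets borel"
    unfolding pre[symmetric] using measurable_sets_borel[OF mB, of "box l u"] by simp
  have bd: "bounded ((\<lambda>x. ?Bi *v x) ` box l u)"
    by (intro bounded_linear_image bounded_box linear_conv_bounded_linear[THEN iffD1] lin)
  have e1: "emeasure lborel ((\<lambda>x. ?Bi *v x) ` box l u) = ennreal (\<bar>det ?Bi\<bar> * measure lborel (box l u))"
    using meq sB emeasure_bounded_finite[OF bd] by (simp add: emeasure_eq_ennreal_measure)
  have e2: "emeasure lborel (box l u) = ennreal (measure lborel (box l u))"
    by (intro emeasure_eq_ennreal_measure) (use emeasure_bounded_finite[OF bounded_box, of l u] in auto)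
  have "ennreal \<bar>det B\<bar> * emeasure lborel ((\<lambda>x. B *v x) -` box l u)
        = ennreal (\<bar>det B\<bar> * \<bar>det ?Bi\<bar> * measure lborel (box l u))"
    unfolding pre e1 by (simp add: ennreal_mult'[symmetric] mult.assoc)
  also have "\<bar>det B\<bar> * \<bar>det ?Bi\<bar> = 1"
    using det_matrix_inv[OF inv] by (metis abs_1 abs_mult)
  finally show ?thesis using e2 by simp
qed


lemma mvec_measurable[measurable]: "(\<lambda>x. (P::real^'n^'m) *v x) \<in> borel_measurable borel"
  by (intro borel_measurable_continuous_onI linear_continuous_on linear_conv_bounded_linear[THEN iffD1] matrix_vector_mul_linear)

lemma emeasure_lborel_tvi:
  assumes "X \<in> sets borel"
  shows "emeasure lborel (X :: (real^'k::finite) set) = emeasure lborel (tvi -` X)"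
proof -
  have "emeasure lborel X = emeasure (distr lborel borel (tvi :: real^'k wo \<Rightarrow> real^'k)) X"
    by (simp add: distr_tvi)
  also have "\<dots> = emeasure lborel (tvi -` X)"
    using assms by (simp add: emeasure_distr)
  finally show ?thesis .
qed

lemma lborel_linear:
  fixes P :: "real^'k::finite^'k"
  assumes inv: "invertible P"
  shows "lborel = density (distr lborel borel (\<lambda>x. P *v x)) (\<lambda>_. ennreal \<bar>det P\<bar>)"
proof (rule lborel_eqI)
  fix l u :: "real^'k" assume le: "\<And>b. b \<in> Basis \<Longrightarrow> l \<bullet> b \<le> u \<bullet> b"
  have inv': "invertible (tm P)" using inv by (simp add: invertible_det_nz det_tm)
  have "emeasure (density (distr lborel borel (\<lambda>x. P *v x)) (\<lambda>_. ennreal \<bar>det P\<bar>)) (box l u)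
      = ennreal \<bar>det P\<bar> * emeasure lborel ((\<lambda>x. P *v x) -` box l u)"
    by (simp add: emeasure_density emeasure_distr nn_integral_cmult_indicator)
  also have "emeasure lborel ((\<lambda>x. P *v x) -` box l u) = emeasure lborel (tvi -` ((\<lambda>x. P *v x) -` box l u))"
    by (rule emeasure_lborel_tvi) (simp add: measurable_sets_borel[OF mvec_measurable, of "box l u", simplified])
  also have "tvi -` ((\<lambda>x. P *v x) -` box l u) = (\<lambda>x. tm P *v x) -` box (tv l) (tv u)"
    by (auto simp: tvi_mult tvi_box[symmetric])
  also have "ennreal \<bar>det P\<bar> * emeasure lborel ((\<lambda>x. tm P *v x) -` box (tv l) (tv u)) = emeasure lborel (box (tv l) (tv u))"
    using lborel_box_linear_wo[OF inv', of "tv l" "tv u"] by (simp add: det_tm)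
  also have "\<dots> = emeasure lborel (box l u)"
    using emeasure_lborel_tvi[of "box l u"] by (simp add: tvi_box)
  also have "\<dots> = (\<Prod>b\<in>Basis. (u - l) \<bullet> b)"
    using le by (simp add: emeasure_lborel_box_eq)
  finally show "emeasure (density (distr lborel borel (\<lambda>x. P *v x)) (\<lambda>_. ennreal \<bar>det P\<bar>)) (box l u) = (\<Prod>b\<in>Basis. (u - l) \<bullet> b)" .
qed simp

lemma nn_integral_linear_change:
  fixes P :: "real^'k::finite^'k" and f :: "real^'k \<Rightarrow> ennreal"
  assumes inv: "invertible P" and f[measurable]: "f \<in> borel_measurable borel"
  shows "(\<integral>\<^sup>+x. f x \<partial>lborel) = ennreal \<bar>det P\<bar> * (\<integral>\<^sup>+z. f (c + P *v z) \<partial>lborel)"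
proof -
  have "(\<integral>\<^sup>+x. f x \<partial>lborel) = (\<integral>\<^sup>+x. f x \<partial>(distr lborel borel ((+) c)))"
    by (simp add: lborel_distr_plus)
  also have "\<dots> = (\<integral>\<^sup>+y. f (c + y) \<partial>lborel)"
    by (simp add: nn_integral_distr)
  also have "\<dots> = (\<integral>\<^sup>+y. f (c + y) \<partial>(density (distr lborel borel (\<lambda>x. P *v x)) (\<lambda>_. ennreal \<bar>det P\<bar>)))"
    by (rule arg_cong[where f="\<lambda>M. \<integral>\<^sup>+y. f (c + y) \<partial>M", OF lborel_linear[OF inv]])
  also have "\<dots> = (\<integral>\<^sup>+y. ennreal \<bar>det P\<bar> * f (c + y) \<partial>(distr lborel borel (\<lambda>x. P *v x)))"
    by (simp add: nn_integral_density)
  also have "\<dots> = (\<integral>\<^sup>+z. ennreal \<bar>det P\<bar> * f (c + P *v z) \<partial>lborel)"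
    by (simp add: nn_integral_distr)
  also have "\<dots> = ennreal \<bar>det P\<bar> * (\<integral>\<^sup>+z. f (c + P *v z) \<partial>lborel)"
    by (simp add: nn_integral_cmult)
  finally show ?thesis .
qed

lemma nn_integral_prod_coord:
  fixes h :: "'k::finite \<Rightarrow> real \<Rightarrow> real"
  assumes hm: "\<And>i. h i \<in> borel_measurable borel" and hn: "\<And>i x. 0 \<le> h i x"
  shows "(\<integral>\<^sup>+z. ennreal (\<Prod>i\<in>UNIV. h i (z $ i)) \<partial>lborel) = (\<Prod>i\<in>UNIV. \<integral>\<^sup>+x. ennreal (h i x) \<partial>lborel)"
proof -
  define f where "f b x = ennreal (h (axis_index b) x)" for b :: "real^'k" and x
  have fm: "f b \<in> borel_measurable borel" for b unfolding f_def using hm by measurable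
  have "(\<integral>\<^sup>+z. ennreal (\<Prod>i\<in>UNIV. h i (z $ i)) \<partial>lborel) = (\<integral>\<^sup>+z. (\<Prod>b\<in>Basis. f b (z \<bullet> b)) \<partial>lborel)"
    by (intro nn_integral_cong) (simp add: prod_Basis_vec f_def inner_axis prod_ennreal hn)
  also have "\<dots> = (\<Prod>b\<in>Basis. (\<integral>\<^sup>+x. f b x \<partial>lborel))"
    by (rule nn_integral_lborel_prod) (use fm in auto)
  also have "\<dots> = (\<Prod>i\<in>UNIV. \<integral>\<^sup>+x. ennreal (h i x) \<partial>lborel)"
    by (simp add: prod_Basis_vec f_def)
  finally show ?thesis .
qed

lemma gauss_1d:
  fixes a b :: real
  assumes a: "a > 0"
  shows "(\<integral>\<^sup>+x. ennreal (exp (-(a/2) * x^2 + b*x)) \<partial>lborel) = ennreal (sqrt (2*pi/a) * exp (b^2/(2*a)))"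
proof -
  define C where "C = sqrt (2*pi/a) * exp (b^2/(2*a))"
  have C: "C \<ge> 0" using a by (simp add: C_def)
  have pt: "exp (-(a/2) * x^2 + b*x) = C * normal_density (b/a) (1/sqrt a) x" for x
  proof -
    have "(1 / sqrt a)\<^sup>2 = 1/a" using a by (simp add: power_divide)
    then have nd: "normal_density (b/a) (1/sqrt a) x = sqrt (a / (2*pi)) * exp (-(a/2) * (x - b/a)^2)"
      unfolding normal_density_def using a by (simp add: real_sqrt_divide field_simps)
    have one: "sqrt (2*pi/a) * sqrt (a/(2*pi)) = 1"
      using a by (simp add: real_sqrt_mult[symmetric])
    have sq: "-(a/2) * x^2 + b*x = b^2/(2*a) + (-(a/2) * (x - b/a)^2)"
      using a by (simp add: field_simps power2_eq_square)
    have "exp (-(a/2) * x^2 + b*x) = exp (b^2/(2*a)) * exp (-(a/2) * (x - b/a)^2)"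
      unfolding sq by (rule exp_add)
    also have "\<dots> = (sqrt (2*pi/a) * sqrt (a/(2*pi))) * exp (b^2/(2*a)) * exp (-(a/2) * (x - b/a)^2)"
      unfolding one by simp
    also have "\<dots> = C * normal_density (b/a) (1/sqrt a) x"
      unfolding nd C_def by (simp only: mult_ac)
    finally show ?thesis .
  qed
  have "(\<integral>\<^sup>+x. ennreal (exp (-(a/2) * x^2 + b*x)) \<partial>lborel) = (\<integral>\<^sup>+x. ennreal C * ennreal (normal_density (b/a) (1/sqrt a) x) \<partial>lborel)"
    by (intro nn_integral_cong) (simp only: pt ennreal_mult[OF C normal_density_nonneg])
  also have "\<dots> = ennreal C * (\<integral>\<^sup>+x. ennreal (normal_density (b/a) (1/sqrt a) x) \<partial>lborel)"
    by (simp add: nn_integral_cmult)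
  also have "(\<integral>\<^sup>+x. ennreal (normal_density (b/a) (1/sqrt a) x) \<partial>lborel) = 1"
    using a by (subst nn_integral_eq_integral) (auto intro!: integrable_normal_density)
  finally show ?thesis by (simp add: C_def)
qed

lemma gd_meas[measurable]: "gauss_density mu Sig \<in> borel_measurable borel"
  unfolding gauss_density_def by measurable

lemma pd_invertible:
  fixes A :: "real^'k^'k"
  assumes "symmetric_pd A" shows "invertible A"
proof -
  have "\<forall>x. A *v x = 0 \<longrightarrow> x = 0"
    using assms unfolding symmetric_pd_def by (metis inner_zero_right less_irrefl)
  then obtain B where "B ** A = mat 1" using matrix_left_invertible_ker by blast
  then show ?thesis unfolding invertible_def using matrix_left_right_inverse by blast
qed

lemma minv_unique:
  fixes A B :: "real^'k^'k"
  assumes "invertible A" "B ** A = mat 1" shows "matrix_inv A = B"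
proof -
  have "B = B ** (A ** matrix_inv A)" using matrix_inv_both(1)[OF assms(1)] by simp
  also have "\<dots> = matrix_inv A" by (simp add: matrix_mul_assoc assms(2))
  finally show ?thesis by simp
qed

lemma inner_transpose: "x \<bullet> ((A::real^'k^'k) *v y) = (transpose A *v x) \<bullet> y"
  by (simp add: dot_lmul_matrix)

lemma pd_inv_pos:
  fixes A :: "real^'k^'k"
  assumes A: "symmetric_pd A" and y: "y \<noteq> 0"
  shows "y \<bullet> (matrix_inv A *v y) > 0"
proof -
  note AA = matrix_inv_both[OF pd_invertible[OF A]]
  define x where "x = matrix_inv A *v y"
  have yx: "y = A *v x" by (simp add: x_def matrix_vector_mul_assoc AA)
  then have "x \<noteq> 0" using y by auto
  then have "x \<bullet> (A *v x) > 0" using A by (simp add: symmetric_pd_def)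
  moreover have "y \<bullet> (matrix_inv A *v y) = x \<bullet> (A *v x)"
    unfolding x_def[symmetric] by (subst yx) (simp add: inner_commute)
  ultimately show ?thesis by simp
qed

lemma diag_mult:
  fixes G :: "real^'k^'k"
  assumes "diagonal_mat G"
  shows "(G *v w) $ i = G $ i $ i * w $ i"
proof -
  have "(G *v w) $ i = (\<Sum>j\<in>UNIV. G $ i $ j * w $ j)" by (simp add: matrix_vector_mult_def)
  also have "\<dots> = (\<Sum>j\<in>UNIV. if j = i then G $ i $ i * w $ i else 0)"
    using assms by (intro sum.cong) (auto simp: diagonal_mat_def)
  finally show ?thesis by simp
qed

lemma diag_quad:
  fixes G :: "real^'k^'k"
  assumes "diagonal_mat G"
  shows "w \<bullet> (G *v w) = (\<Sum>i\<in>UNIV. G $ i $ i * (w $ i)^2)"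
  by (simp add: inner_vec_def diag_mult[OF assms] power2_eq_square mult_ac)

lemma vec_alg:
  fixes S Si U G Ai :: "real^'k^'k"
  assumes SSi: "S ** Si = mat 1" and SiS: "Si ** S = mat 1" and St: "transpose S = S"
    and UtU: "transpose U ** U = mat 1" and UUt: "U ** transpose U = mat 1"
    and UG: "U ** G ** transpose U = S ** Ai ** S"
  shows "((S ** U) *v z) \<bullet> ((Si ** Si) *v ((S ** U) *v z)) = z \<bullet> z"
    and "(S ** U) *v (transpose U *v (Si *v d)) = d"
    and "((S ** U) *v w) \<bullet> (Ai *v ((S ** U) *v w)) = w \<bullet> (G *v w)"
proof -
  have SiSv: "Si *v (S *v x) = x" for x by (simp add: matrix_vector_mul_assoc SiS)
  have SSiv: "S *v (Si *v x) = x" for x by (simp add: matrix_vector_mul_assoc SSi)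
  have UtUv: "transpose U *v (U *v x) = x" for x by (simp only: matrix_vector_mul_assoc UtU matrix_vector_mul_lid)
  have UUtv: "U *v (transpose U *v x) = x" for x by (simp only: matrix_vector_mul_assoc UUt matrix_vector_mul_lid)
  note mva = matrix_vector_mul_assoc[symmetric]
  have "((S ** U) *v z) \<bullet> ((Si ** Si) *v ((S ** U) *v z)) = (S *v (U *v z)) \<bullet> (Si *v (U *v z))"
    by (simp add: mva SiSv)
  also have "\<dots> = (Si *v (U *v z)) \<bullet> (S *v (U *v z))" by (rule inner_commute)
  also have "\<dots> = (U *v z) \<bullet> (U *v z)"
    by (subst inner_transpose) (simp add: St SSiv del: transpose_matrix_vector)
  also have "\<dots> = z \<bullet> z"
    by (subst inner_transpose) (simp add: UtUv del: transpose_matrix_vector)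
  finally show "((S ** U) *v z) \<bullet> ((Si ** Si) *v ((S ** U) *v z)) = z \<bullet> z" .
  show "(S ** U) *v (transpose U *v (Si *v d)) = d"
    by (simp add: mva UUtv SSiv del: transpose_matrix_vector)
  have "((S ** U) *v w) \<bullet> (Ai *v ((S ** U) *v w)) = (S *v (U *v w)) \<bullet> (Ai *v (S *v (U *v w)))"
    by (simp add: mva)
  also have "\<dots> = (U *v w) \<bullet> (S *v (Ai *v (S *v (U *v w))))"
    by (subst inner_commute, subst inner_transpose) (simp add: St inner_commute del: transpose_matrix_vector)
  also have "S *v (Ai *v (S *v (U *v w))) = U *v (G *v w)"
  proof -
    have "S *v (Ai *v (S *v (U *v w))) = (S ** Ai ** S) *v (U *v w)" by (simp add: mva)
    also have "\<dots> = (U ** G ** transpose U) *v (U *v w)" by (simp add: UG)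
    also have "\<dots> = U *v (G *v w)" by (simp add: mva UtUv del: transpose_matrix_vector)
    finally show ?thesis .
  qed
  also have "(U *v w) \<bullet> (U *v (G *v w)) = w \<bullet> (G *v w)"
    by (subst inner_transpose) (simp add: UtUv del: transpose_matrix_vector)
  finally show "((S ** U) *v w) \<bullet> (Ai *v ((S ** U) *v w)) = w \<bullet> (G *v w)" .
qed


lemma eig_bound:
  fixes U G M :: "real^'k^'k"
  assumes UtU: "transpose U ** U = mat 1" and UUt: "U ** transpose U = mat 1"
    and UG: "U ** G ** transpose U = M" and dG: "diagonal_mat G"
  shows "G $ i $ i \<le> lambda_max M"
proof -
  have UtUv: "transpose U *v (U *v x) = x" for x by (simp only: matrix_vector_mul_assoc UtU matrix_vector_mul_lid)
  have UUtv: "U *v (transpose U *v x) = x" for x by (simp only: matrix_vector_mul_assoc UUt matrix_vector_mul_lid)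
  have Mv: "M *v x = U *v (G *v (transpose U *v x))" for x
    unfolding UG[symmetric] by (simp only: matrix_vector_mul_assoc matrix_mul_assoc)
  define E where "E = {l. \<exists>v. v \<noteq> 0 \<and> M *v v = l *\<^sub>R v}"
  have sub: "E \<subseteq> range (\<lambda>j. G $ j $ j)"
  proof
    fix l assume "l \<in> E"
    then obtain v where v: "v \<noteq> 0" "M *v v = l *\<^sub>R v" by (auto simp: E_def)
    define w where "w = transpose U *v v"
    have "w \<noteq> 0" using v(1) UUtv[of v] by (auto simp: w_def)
    then obtain j where j: "w $ j \<noteq> 0" by (auto simp: vec_eq_iff)
    have "G *v w = transpose U *v (M *v v)" by (simp only: Mv UtUv w_def)
    also have "\<dots> = l *\<^sub>R w" by (simp only: v(2) w_def matrix_vector_mult_scaleR)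
    finally have "(G *v w) $ j = l * w $ j" by simp
    then have "G $ j $ j * w $ j = l * w $ j" by (simp add: diag_mult[OF dG])
    then have "l = G $ j $ j" using j by simp
    then show "l \<in> range (\<lambda>j. G $ j $ j)" by blast
  qed
  have fin: "finite E" by (rule finite_subset[OF sub]) simp
  define v where "v = U *v axis i 1"
  have "v \<noteq> 0" using UtUv[of "axis i 1"] by (auto simp: v_def)
  moreover have "G *v axis i 1 = G $ i $ i *\<^sub>R axis i 1"
    by (simp add: vec_eq_iff diag_mult[OF dG] axis_def)
  then have "M *v v = G $ i $ i *\<^sub>R v"
    by (simp add: Mv v_def UtUv matrix_vector_mult_scaleR del: transpose_matrix_vector)
  ultimately have "G $ i $ i \<in> E" by (auto simp: E_def)
  then show ?thesis unfolding lambda_max_def E_def[symmetric] using fin by simp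
qed

lemma ex_aux:
  fixes t G m D :: real
  assumes "t \<noteq> 0" "D \<noteq> 0"
  shows "t * G * m^2 / 2 + (- (t * G * m))^2 / (2 * (t * D)) = (t * (D + G)) / 2 * (G * m^2 / D)"
  using assms by (simp add: field_simps power2_eq_square)

lemma sqrt_prod: "sqrt (\<Prod>i\<in>A. f i) = (\<Prod>i\<in>A. sqrt (f i))"
  by (induction A rule: infinite_finite_induct) (auto simp: real_sqrt_mult)

theorem lemma1:
  fixes eps s :: real
    and muX muX' :: "real^'k"
    and SigX SigX' S U Gam :: "real^'k^'k"
  assumes "symmetric_pd SigX" and "symmetric_pd SigX'"
    and "symmetric_pd S" and "S ** S = SigX"
    and "orthogonal_matrix U" and "diagonal_mat Gam"
    and "U ** Gam ** transpose U = S ** matrix_inv SigX' ** S"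
    and "s > max 1 (lambda_max (S ** matrix_inv SigX' ** S))"
  shows "let L = (\<lambda>q. ln (gauss_density muX SigX q / gauss_density muX' SigX' q));
             mu = transpose U *v (matrix_inv S *v (muX' - muX));
             k = real CARD('k)
         in measure (gauss_measure muX SigX) {q. L q > eps}
            \<le> (s - 1) powr (k / 2)
               / (det Gam powr (1 / (2 * (s - 1))) * sqrt (det (s *\<^sub>R mat 1 - Gam)))
               * exp (- eps / (s - 1)
                      + s / (2 * (s - 1)) * (mu \<bullet> (matrix_inv (s *\<^sub>R mat 1 - Gam) *v (Gam *v mu))))"
proof -
  note pdX = assms(1) and pdX' = assms(2) and pdS = assms(3) and SS = assms(4) and oU = assms(5)
    and dG = assms(6) and UG = assms(7) and sgt = assms(8)
  define Si where "Si = matrix_inv S"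
  define Ai where "Ai = matrix_inv SigX'"
  define gm where "gm i = Gam $ i $ i" for i
  define t where "t = 1 / (s - 1)"
  define d where "d = muX' - muX"
  define mu where "mu = transpose U *v (Si *v d)"
  define P where "P = S ** U"
  define g where "g = gauss_density muX SigX"
  define g' where "g' = gauss_density muX' SigX'"
  define L where "L q = ln (g q / g' q)" for q
  define RHS where "RHS = (s - 1) powr (real CARD('k) / 2)
               / (det Gam powr (1 / (2 * (s - 1))) * sqrt (det (s *\<^sub>R mat 1 - Gam)))
               * exp (- eps / (s - 1)
                      + s / (2 * (s - 1)) * (mu \<bullet> (matrix_inv (s *\<^sub>R mat 1 - Gam) *v (Gam *v mu))))"
  have invS: "invertible S" by (rule pd_invertible[OF pdS])
  note SSi = matrix_inv_both[OF invS, folded Si_def]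
  have St: "transpose S = S" using pdS by (simp add: symmetric_pd_def)
  have invX': "invertible SigX'" by (rule pd_invertible[OF pdX'])
  have invX: "invertible SigX" by (rule pd_invertible[OF pdX])
  have invSigX: "matrix_inv SigX = Si ** Si"
    by (rule minv_unique[OF invX]) (metis SS SSi(2) matrix_mul_assoc matrix_mul_lid)
  have UtU: "transpose U ** U = mat 1" and UUt: "U ** transpose U = mat 1"
    using oU by (simp_all add: orthogonal_matrix_def)
  have UG': "U ** Gam ** transpose U = S ** Ai ** S" using UG by (simp add: Ai_def)
  note va = vec_alg[OF SSi St UtU UUt UG']
  have SiSv: "Si *v (S *v x) = x" for x by (simp add: matrix_vector_mul_assoc SSi)
  have UtUv: "transpose U *v (U *v x) = x" for x by (simp only: matrix_vector_mul_assoc UtU matrix_vector_mul_lid)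
  have gpos: "gm i > 0" for i
  proof -
    define w :: "real^'k" where "w = axis i 1"
    have "(S ** U) *v w \<noteq> 0"
    proof
      assume "(S ** U) *v w = 0"
      then have "transpose U *v (Si *v ((S ** U) *v w)) = 0" by simp
      moreover have "transpose U *v (Si *v ((S ** U) *v w)) = w"
        by (simp only: matrix_vector_mul_assoc[symmetric] SiSv UtUv)
      ultimately show False by (simp add: w_def)
    qed
    then have "((S ** U) *v w) \<bullet> (Ai *v ((S ** U) *v w)) > 0"
      unfolding Ai_def by (rule pd_inv_pos[OF pdX'])
    also have "((S ** U) *v w) \<bullet> (Ai *v ((S ** U) *v w)) = w \<bullet> (Gam *v w)" by (rule va(3))
    also have "\<dots> = gm i"
    proof -
      have "(\<Sum>j\<in>UNIV. Gam $ j $ j * (w $ j)^2) = (\<Sum>j\<in>UNIV. if j = i then gm i else 0)"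
        by (intro sum.cong) (auto simp: w_def axis_def gm_def)
      then show ?thesis by (simp add: diag_quad[OF dG])
    qed
    finally show ?thesis .
  qed
  have s1: "s > 1" and sg: "gm i < s" for i
    using sgt eig_bound[OF UtU UUt UG dG, of i] by (auto simp: gm_def)
  have tpos: "t > 0" using s1 by (simp add: t_def)
  have detS: "det S \<noteq> 0" using invS by (simp add: invertible_det_nz)
  have dX: "det SigX = det S * det S" using SS det_mul[of S S] by simp
  have dXpos: "det SigX > 0" unfolding dX using detS by (metis not_real_square_gt_zero)
  have DG: "det Gam = (\<Prod>i\<in>UNIV. gm i)"
    unfolding gm_def by (rule det_diagonal) (use dG in \<open>auto simp: diagonal_mat_def\<close>)
  have DGpos: "det Gam > 0" unfolding DG by (rule prod_pos) (simp add: gpos)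
  have detU: "det U * det U = 1" using det_orthogonal_matrix[OF oU] by auto
  have "det (U ** Gam ** transpose U) = det Gam"
    using detU by (simp add: det_mul)
  moreover have "det (S ** Ai ** S) = det SigX * det Ai"
    by (simp add: det_mul dX)
  ultimately have DGeq: "det Gam = det SigX * det Ai" using UG' by simp
  have "det SigX' * det Ai = 1" unfolding Ai_def by (rule det_matrix_inv[OF invX'])
  then have dX': "det SigX' = det SigX / det Gam"
  proof -
    have "det Ai \<noteq> 0" using DGeq DGpos by auto
    then have "det SigX' = 1 / det Ai" using \<open>det SigX' * det Ai = 1\<close> by (simp add: field_simps)
    then show ?thesis using DGeq dXpos by simp
  qed
  have dX'pos: "det SigX' > 0" using dX' dXpos DGpos by simp
  have detP: "\<bar>det P\<bar> = sqrt (det SigX)"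
  proof -
    have "\<bar>det U\<bar> = 1" using det_orthogonal_matrix[OF oU] by auto
    then show ?thesis by (simp add: P_def det_mul dX abs_mult real_sqrt_mult)
  qed
  have invP: "invertible P" using detP dXpos by (simp add: invertible_det_nz) (metis abs_0 real_sqrt_gt_zero less_irrefl)
  have gnn: "g q \<ge> 0" for q using dXpos by (simp add: g_def gauss_density_def)
  define a where "a i = 1 + t - t * gm i" for i
  define b where "b i = - (t * gm i * mu $ i)" for i
  define c where "c i = t * gm i * (mu $ i)^2 / 2" for i
  define h where "h i y = exp (-(a i / 2) * y^2 + b i * y)" for i y
  define K0 where "K0 = exp (- t * eps) * exp (- (t/2) * ln (det Gam)) * (\<Prod>i\<in>UNIV. exp (c i) / sqrt (2 * pi))"
  have apos: "a i > 0" for i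
  proof -
    have ne: "s - 1 \<noteq> 0" using s1 by simp
    have "(s - gm i) / (s - 1) = ((s - 1) + 1 - gm i) / (s - 1)" by simp
    also have "\<dots> = (s - 1) / (s - 1) + 1 / (s - 1) - gm i / (s - 1)"
      by (simp only: add_divide_distrib diff_divide_distrib)
    also have "\<dots> = a i" using ne by (simp add: a_def t_def)
    finally have "a i = (s - gm i) / (s - 1)" by simp
    then show ?thesis using s1 sg[of i] by simp
  qed
  have K0nn: "K0 \<ge> 0" by (simp add: K0_def prod_nonneg)
  have pw: "\<bar>det P\<bar> * (g (muX + P *v z) * exp (t * (L (muX + P *v z) - eps))) = K0 * (\<Prod>i\<in>UNIV. h i (z $ i))" for z
  proof -
    define q where "q = muX + P *v z"
    define w where "w = z - mu"
    define Z where "Z = z \<bullet> z"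
    define W where "W = w \<bullet> (Gam *v w)"
    define n where "n = CARD('k)"
    define DG where "DG = det Gam"
    have Q1: "(q - muX) \<bullet> (matrix_inv SigX *v (q - muX)) = Z"
      unfolding q_def Z_def invSigX P_def by (simp add: va(1))
    have Pmu: "P *v mu = d" unfolding P_def mu_def by (rule va(2))
    have "q - muX' = P *v w"
      by (simp add: q_def w_def matrix_vector_mult_diff_distrib Pmu d_def)
    then have Q2: "(q - muX') \<bullet> (matrix_inv SigX' *v (q - muX')) = W"
      unfolding W_def P_def Ai_def[symmetric] by (simp add: va(3))
    have gq: "g q = exp (-(1/2) * Z) / sqrt ((2*pi)^n * det SigX)"
      unfolding g_def gauss_density_def Q1 n_def by simp
    have g'q: "g' q = exp (-(1/2) * W) / sqrt ((2*pi)^n * det SigX')"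
      unfolding g'_def gauss_density_def Q2 n_def by simp
    have sp: "sqrt ((2*pi)^n) > 0" by simp
    have "g q / g' q = (exp (-(1/2) * Z) / exp (-(1/2) * W)) * (sqrt ((2*pi)^n * det SigX') / sqrt ((2*pi)^n * det SigX))"
      unfolding gq g'q using dXpos dX'pos by (simp add: field_simps)
    also have "exp (-(1/2) * Z) / exp (-(1/2) * W) = exp (-(1/2) * Z - (-(1/2) * W))"
      by (rule exp_diff[symmetric])
    also have "sqrt ((2*pi)^n * det SigX') / sqrt ((2*pi)^n * det SigX) = 1 / sqrt DG"
      using sp dXpos DGpos by (simp add: real_sqrt_mult dX' DG_def real_sqrt_divide field_simps)
    finally have "g q / g' q = exp (-(1/2) * Z + (1/2) * W) / sqrt DG" by simp
    then have Lq: "L q = -(1/2) * Z + (1/2) * W - ln DG / 2"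
      unfolding L_def using DGpos by (simp add: ln_div ln_sqrt DG_def)
    have LHS: "\<bar>det P\<bar> * (g q * exp (t * (L q - eps)))
        = exp (-(1/2) * Z) / sqrt ((2*pi)^n) * exp (t * (L q - eps))"
      unfolding detP gq using dXpos sp by (simp add: real_sqrt_mult field_simps)
    define E where "E = (\<Sum>i\<in>UNIV. c i + (-(a i / 2) * (z $ i)^2 + b i * z $ i))"
    have Zs: "Z = (\<Sum>i\<in>UNIV. (z $ i)^2)" by (simp add: Z_def inner_vec_def power2_eq_square)
    have Ws: "W = (\<Sum>i\<in>UNIV. gm i * (z $ i - mu $ i)^2)"
      by (simp add: W_def diag_quad[OF dG] w_def gm_def)
    have sumid: "E = -(1/2) * Z + t * ((1/2) * W - (1/2) * Z)"
    proof -
      have "E = (\<Sum>i\<in>UNIV. (-(1/2) - t/2) * (z $ i)^2 + (t/2) * (gm i * (z $ i - mu $ i)^2))"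
        unfolding E_def by (intro sum.cong refl) (simp add: a_def b_def c_def power2_eq_square field_simps)
      also have "\<dots> = (-(1/2) - t/2) * Z + (t/2) * W"
        by (simp add: Zs Ws sum.distrib sum_distrib_left)
      also have "\<dots> = -(1/2) * Z + t * ((1/2) * W - (1/2) * Z)"
        by (simp add: algebra_simps)
      finally show ?thesis .
    qed
    have RHS: "K0 * (\<Prod>i\<in>UNIV. h i (z $ i)) = exp (- t * eps) * exp (- (t/2) * ln DG) * (exp E / sqrt ((2*pi)^n))"
    proof -
      have "(\<Prod>i\<in>UNIV. exp (c i) / sqrt (2 * pi)) * (\<Prod>i\<in>UNIV. h i (z $ i))
          = (\<Prod>i\<in>UNIV. exp (c i + (-(a i / 2) * (z $ i)^2 + b i * z $ i)) / sqrt (2 * pi))"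
        by (simp add: prod.distrib[symmetric] h_def exp_add)
      also have "\<dots> = (\<Prod>i\<in>UNIV. exp (c i + (-(a i / 2) * (z $ i)^2 + b i * z $ i))) / (\<Prod>i\<in>(UNIV::'k set). sqrt (2 * pi))"
        by (simp only: prod_dividef)
      also have "\<dots> = exp E / sqrt ((2*pi)^n)"
        unfolding E_def exp_sum[OF finite] prod_constant n_def real_sqrt_power ..
      finally show ?thesis by (simp add: K0_def DG_def mult.assoc)
    qed
    have X: "-(1/2) * Z + t * ((-(1/2) * Z + (1/2) * W - ln DG / 2) - eps)
        = (- t * eps + (- (t/2) * ln DG)) + (-(1/2) * Z + t * ((1/2) * W - (1/2) * Z))"
      by (simp add: algebra_simps)
    have "\<bar>det P\<bar> * (g (muX + P *v z) * exp (t * (L (muX + P *v z) - eps)))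
        = \<bar>det P\<bar> * (g q * exp (t * (L q - eps)))" by (simp add: q_def)
    also have "\<dots> = exp (-(1/2) * Z) / sqrt ((2*pi)^n) * exp (t * (L q - eps))" by (rule LHS)
    also have "\<dots> = exp (-(1/2) * Z + t * ((-(1/2) * Z + (1/2) * W - ln DG / 2) - eps)) / sqrt ((2*pi)^n)"
      unfolding Lq exp_add by simp
    also have "\<dots> = exp (- t * eps) * exp (- (t/2) * ln DG) * (exp E / sqrt ((2*pi)^n))"
      unfolding X sumid exp_add by simp
    also have "\<dots> = K0 * (\<Prod>i\<in>UNIV. h i (z $ i))" by (rule RHS[symmetric])
    finally show ?thesis .
  qed
  have fin_alg: "K0 * (\<Prod>i\<in>UNIV. sqrt (2*pi/a i) * exp ((b i)^2/(2*a i))) = RHS"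
  proof -
    define e where "e i = s / (2 * (s - 1)) * (gm i * (mu $ i)^2 / (s - gm i))" for i
    have ne: "s - 1 \<noteq> 0" using s1 by simp
    have sgp: "s - gm i > 0" for i using sg[of i] by simp
    have a_eq: "a i = t * (s - gm i)" for i
    proof -
      have "(s - gm i) / (s - 1) = ((s - 1) + 1 - gm i) / (s - 1)" by simp
      also have "\<dots> = (s - 1) / (s - 1) + 1 / (s - 1) - gm i / (s - 1)"
        by (simp only: add_divide_distrib diff_divide_distrib)
      also have "\<dots> = a i" using ne by (simp add: a_def t_def)
      finally show ?thesis by (simp add: t_def)
    qed
    have trm: "(exp (c i) / sqrt (2 * pi)) * (sqrt (2*pi/a i) * exp ((b i)^2/(2*a i)))
        = sqrt (s - 1) / sqrt (s - gm i) * exp (e i)" for i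
    proof -
      have sq: "sqrt (2*pi/a i) / sqrt (2 * pi) = sqrt (s - 1) / sqrt (s - gm i)"
      proof -
        have "2*pi/a i / (2*pi) = (s - 1) / (s - gm i)"
          using s1 sgp[of i] by (simp add: a_eq t_def field_simps)
        then have "sqrt (2*pi/a i / (2*pi)) = sqrt (s - 1) / sqrt (s - gm i)"
          by (simp add: real_sqrt_divide)
        then show ?thesis by (simp add: real_sqrt_divide)
      qed
      have ex: "c i + (b i)^2/(2*a i) = e i"
      proof -
        have E1: "c i + (b i)^2/(2*a i) = (t * ((s - gm i) + gm i)) / 2 * (gm i * (mu $ i)^2 / (s - gm i))"
          unfolding c_def b_def a_eq by (rule ex_aux) (use tpos sgp[of i] in auto)
        have E2: "(t * ((s - gm i) + gm i)) / 2 = s / (2 * (s - 1))" by (simp add: t_def)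
        show ?thesis by (simp only: E1 E2 e_def)
      qed
      have "(exp (c i) / sqrt (2 * pi)) * (sqrt (2*pi/a i) * exp ((b i)^2/(2*a i)))
          = (sqrt (2*pi/a i) / sqrt (2 * pi)) * exp (c i + (b i)^2/(2*a i))"
        by (simp add: exp_add)
      then show ?thesis unfolding sq ex .
    qed
    have detsG: "det (s *\<^sub>R mat 1 - Gam) = (\<Prod>i\<in>UNIV. s - gm i)"
      by (subst det_diagonal) (use dG in \<open>auto simp: diagonal_mat_def mat_def gm_def\<close>)
    have dB: "diagonal_mat (s *\<^sub>R mat 1 - Gam)" using dG by (auto simp: diagonal_mat_def mat_def)
    have invB: "invertible (s *\<^sub>R mat 1 - Gam)"
      unfolding invertible_det_nz detsG using sgp by (simp add: less_imp_neq[symmetric])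
    have quad: "mu \<bullet> (matrix_inv (s *\<^sub>R mat 1 - Gam) *v (Gam *v mu)) = (\<Sum>i\<in>UNIV. gm i * (mu $ i)^2 / (s - gm i))"
    proof -
      define y where "y = matrix_inv (s *\<^sub>R mat 1 - Gam) *v (Gam *v mu)"
      have "(s *\<^sub>R mat 1 - Gam) *v y = ((s *\<^sub>R mat 1 - Gam) ** matrix_inv (s *\<^sub>R mat 1 - Gam)) *v (Gam *v mu)"
        unfolding y_def by (rule matrix_vector_mul_assoc)
      also have "\<dots> = Gam *v mu" by (simp only: matrix_inv_both(1)[OF invB] matrix_vector_mul_lid)
      finally have "(s *\<^sub>R mat 1 - Gam) *v y = Gam *v mu" .
      then have "((s *\<^sub>R mat 1 - Gam) *v y) $ i = (Gam *v mu) $ i" for i by simp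
      moreover have "((s *\<^sub>R mat 1 - Gam) *v y) $ i = (s *\<^sub>R mat 1 - Gam) $ i $ i * y $ i" for i
        by (rule diag_mult[OF dB])
      moreover have "(s *\<^sub>R mat 1 - Gam) $ i $ i = s - gm i" for i by (simp add: mat_def gm_def)
      moreover have "(Gam *v mu) $ i = gm i * mu $ i" for i by (simp add: diag_mult[OF dG] gm_def)
      ultimately have "(s - gm i) * y $ i = gm i * mu $ i" for i by metis
      then have yi: "y $ i = gm i * mu $ i / (s - gm i)" for i
        using sgp[of i] by (simp add: field_simps)
      show ?thesis unfolding y_def[symmetric]
        by (simp add: inner_vec_def yi power2_eq_square mult_ac)
    qed
    have "K0 * (\<Prod>i\<in>UNIV. sqrt (2*pi/a i) * exp ((b i)^2/(2*a i)))
        = exp (- t * eps) * exp (- (t/2) * ln (det Gam)) * (\<Prod>i\<in>UNIV. sqrt (s - 1) / sqrt (s - gm i) * exp (e i))"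
    proof -
      have "K0 * (\<Prod>i\<in>UNIV. sqrt (2*pi/a i) * exp ((b i)^2/(2*a i)))
        = exp (- t * eps) * exp (- (t/2) * ln (det Gam)) * ((\<Prod>i\<in>UNIV. exp (c i) / sqrt (2 * pi)) * (\<Prod>i\<in>UNIV. sqrt (2*pi/a i) * exp ((b i)^2/(2*a i))))"
        by (simp only: K0_def mult.assoc)
      also have "(\<Prod>i\<in>UNIV. exp (c i) / sqrt (2 * pi)) * (\<Prod>i\<in>UNIV. sqrt (2*pi/a i) * exp ((b i)^2/(2*a i)))
          = (\<Prod>i\<in>UNIV. (exp (c i) / sqrt (2 * pi)) * (sqrt (2*pi/a i) * exp ((b i)^2/(2*a i))))"
        by (rule prod.distrib[symmetric])
      also have "\<dots> = (\<Prod>i\<in>UNIV. sqrt (s - 1) / sqrt (s - gm i) * exp (e i))"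
        by (rule prod.cong[OF refl trm])
      finally show ?thesis .
    qed
    also have "(\<Prod>i\<in>UNIV. sqrt (s - 1) / sqrt (s - gm i) * exp (e i))
        = sqrt (s - 1) ^ CARD('k) / sqrt (\<Prod>i\<in>UNIV. s - gm i) * exp (\<Sum>i\<in>UNIV. e i)"
      by (simp add: prod.distrib prod_dividef sqrt_prod exp_sum)
    also have "sqrt (s - 1) ^ CARD('k) = (s - 1) powr (real CARD('k) / 2)"
      using s1 by (simp add: powr_half_sqrt_powr powr_realpow real_sqrt_power)
    also have "exp (- (t/2) * ln (det Gam)) = 1 / det Gam powr (1 / (2 * (s - 1)))"
      using DGpos by (simp add: powr_def t_def exp_minus field_simps)
    also have "(\<Sum>i\<in>UNIV. e i) = s / (2 * (s - 1)) * (mu \<bullet> (matrix_inv (s *\<^sub>R mat 1 - Gam) *v (Gam *v mu)))"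
      unfolding quad e_def by (simp add: sum_distrib_left)
    finally have F: "K0 * (\<Prod>i\<in>UNIV. sqrt (2*pi/a i) * exp ((b i)^2/(2*a i)))
       = exp (- t * eps) * (1 / det Gam powr (1 / (2 * (s - 1)))) *
         ((s - 1) powr (real CARD('k) / 2) / sqrt (det (s *\<^sub>R mat 1 - Gam)) *
          exp (s / (2 * (s - 1)) * (mu \<bullet> (matrix_inv (s *\<^sub>R mat 1 - Gam) *v (Gam *v mu)))))"
      unfolding detsG .
    have e1: "- eps / (s - 1) = - t * eps" by (simp add: t_def)
    have p1: "det Gam powr (1 / (2 * (s - 1))) > 0" using DGpos by simp
    have p2: "sqrt (det (s *\<^sub>R mat 1 - Gam)) > 0" unfolding detsG using sgp by (simp add: prod_pos)
    show ?thesis unfolding F RHS_def exp_add e1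
      using p1 p2 by (simp add: field_simps)
  qed
  have main_int: "(\<integral>\<^sup>+q. ennreal (g q * exp (t * (L q - eps))) \<partial>lborel) = ennreal RHS"
  proof -
    have Fm: "(\<lambda>q. ennreal (g q * exp (t * (L q - eps)))) \<in> borel_measurable borel"
      unfolding L_def g_def g'_def by measurable
    have "(\<integral>\<^sup>+q. ennreal (g q * exp (t * (L q - eps))) \<partial>lborel)
        = ennreal \<bar>det P\<bar> * (\<integral>\<^sup>+z. ennreal (g (muX + P *v z) * exp (t * (L (muX + P *v z) - eps))) \<partial>lborel)"
      by (rule nn_integral_linear_change[OF invP Fm])
    also have "\<dots> = (\<integral>\<^sup>+z. ennreal (\<bar>det P\<bar> * (g (muX + P *v z) * exp (t * (L (muX + P *v z) - eps)))) \<partial>lborel)"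
      using Fm by (subst nn_integral_cmult[symmetric]) (auto intro!: nn_integral_cong simp: ennreal_mult gnn)
    also have "\<dots> = (\<integral>\<^sup>+z. ennreal K0 * ennreal (\<Prod>i\<in>UNIV. h i (z $ i)) \<partial>lborel)"
      by (intro nn_integral_cong) (simp add: pw ennreal_mult K0nn prod_nonneg h_def)
    also have "\<dots> = ennreal K0 * (\<integral>\<^sup>+z. ennreal (\<Prod>i\<in>UNIV. h i (z $ i)) \<partial>lborel)"
      by (rule nn_integral_cmult) (simp add: h_def)
    also have "(\<integral>\<^sup>+z. ennreal (\<Prod>i\<in>UNIV. h i (z $ i)) \<partial>lborel) = (\<Prod>i\<in>UNIV. \<integral>\<^sup>+y. ennreal (h i y) \<partial>lborel)"
      by (rule nn_integral_prod_coord) (simp_all add: h_def)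
    also have "\<dots> = (\<Prod>i\<in>UNIV. ennreal (sqrt (2*pi/a i) * exp ((b i)^2/(2*a i))))"
      unfolding h_def by (intro prod.cong refl gauss_1d[OF apos])
    also have "ennreal K0 * \<dots> = ennreal (K0 * (\<Prod>i\<in>UNIV. sqrt (2*pi/a i) * exp ((b i)^2/(2*a i))))"
    proof -
      have "(\<Prod>i\<in>UNIV. ennreal (sqrt (2*pi/a i) * exp ((b i)^2/(2*a i)))) = ennreal (\<Prod>i\<in>UNIV. sqrt (2*pi/a i) * exp ((b i)^2/(2*a i)))"
        by (rule prod_ennreal) (use apos in \<open>simp add: less_imp_le\<close>)
      then show ?thesis using K0nn apos by (simp add: ennreal_mult prod_nonneg less_imp_le)
    qed
    finally show ?thesis unfolding fin_alg .
  qed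
  have RHSnn: "RHS \<ge> 0" unfolding fin_alg[symmetric] using apos K0nn by (simp add: prod_nonneg less_imp_le)
  let ?A = "{q. L q > eps}"
  have em: "emeasure (gauss_measure muX SigX) ?A \<le> ennreal RHS"
  proof (cases "?A \<in> sets borel")
    case True
    have "emeasure (gauss_measure muX SigX) ?A = (\<integral>\<^sup>+q. ennreal (g q) * indicator ?A q \<partial>lborel)"
      unfolding gauss_measure_def g_def using True by (simp add: emeasure_density)
    also have "\<dots> \<le> (\<integral>\<^sup>+q. ennreal (g q * exp (t * (L q - eps))) \<partial>lborel)"
    proof (intro nn_integral_mono)
      fix q
      show "ennreal (g q) * indicator ?A q \<le> ennreal (g q * exp (t * (L q - eps)))"
      proof (cases "q \<in> ?A")
        case True
        then have "t * (L q - eps) \<ge> 0" using tpos by simp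
        then have "exp (t * (L q - eps)) \<ge> 1" by simp
        then have "g q \<le> g q * exp (t * (L q - eps))" using gnn[of q]
          by (metis mult.right_neutral mult_left_mono)
        then show ?thesis using True by (simp add: ennreal_leI)
      qed simp
    qed
    finally show ?thesis using main_int by simp
  next
    case False
    then have "?A \<notin> sets (gauss_measure muX SigX)" by (simp add: gauss_measure_def)
    then show ?thesis by (simp add: emeasure_notin_sets)
  qed
  have "measure (gauss_measure muX SigX) ?A \<le> RHS"
    unfolding measure_def using enn2real_mono[OF em] RHSnn by simp
  then show ?thesis
    unfolding Let_def RHS_def L_def g_def g'_def mu_def Si_def d_def .
qed

end
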